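(* Let $M\in\Gamma$ be a monitor, $N$ a malicious node, and $P$ an honest inbound peer of $N$ (i.e. $(P,N)\in E$). If $M$ executes $PeeV(N)$ and $N$ forwards the marker it receives from $M$ to $P$, then when $PeeV(N)$ ends, $P\notin L_N^M$.
   Context: The network is a directed graph $G=(V,E)$ of nodes; $(X,Y)\in E$ means $X$ has an outbound connection to $Y$, so $Y$ is an outbound peer of $X$ and $X$ is an inbound peer of $Y$. $\Gamma$ is a set of legitimate monitors, each connected to every node. A marker is a triple $[N,M,r]$ (target, monitor, random value). $PeeV(N)$, run by $M$: start with empty $L_N^M$; draw random $r$; send $[N,M,r]$ to $N$; until a timeout, whenever a marker equal to $[N,M,r]$ is received from a node $P$, add $P$ to $L_N^M$; then output $L_N^M$. An honest node $X$ processes every received marker with $HandleMarker(pfrom,[N,M,r])$: if $pfrom=M\in\Gamma$, forward the marker to all outbound peers of $X$; if $pfrom=N$ and $N$ is an inbound peer of $X$, send the marker to $M$; otherwise do nothing. A malicious node may deviate arbitrarily from these rules. *)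

theory Defs
  imports Main
begin

text \<open>Participants (nodes and monitors) have type 'a; random values have type 'r.
  A marker [N,M,r] is the triple (N, M, r).  A send event (s, d, m) means that
  participant s sends marker m to participant d (and d receives it from s;
  channels are authenticated, so the receiver learns the true sender).
  An execution is the list of send events in chronological order, truncated at the timeout.\<close>

type_synonym ('a,'r) marker = "'a \<times> 'a \<times> 'r"
type_synonym ('a,'r) event = "'a \<times> 'a \<times> ('a,'r) marker"

definition mtarget :: "('a,'r) marker \<Rightarrow> 'a" where "mtarget m = fst m"
definition mmonitor :: "('a,'r) marker \<Rightarrow> 'a" where "mmonitor m = fst (snd m)"

definition network :: "'a set \<Rightarrow> ('a \<times> 'a) set \<Rightarrow> 'a set \<Rightarrow> bool" where
  "network V E \<Gamma> \<longleftrightarrow> E \<subseteq> V \<times> V \<and> (\<forall>X Y. (X,Y) \<in> E \<longrightarrow> (Y,X) \<notin> E) \<and> V \<inter> \<Gamma> = {}"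

definition handle_marker_sends :: "('a \<times> 'a) set \<Rightarrow> 'a set \<Rightarrow> 'a \<Rightarrow> 'a \<Rightarrow> ('a,'r) marker \<Rightarrow> 'a \<Rightarrow> bool" where
  "handle_marker_sends E \<Gamma> X pfrom m d \<longleftrightarrow>
     (pfrom = mmonitor m \<and> pfrom \<in> \<Gamma> \<and> (X, d) \<in> E)
   \<or> (\<not> (pfrom = mmonitor m \<and> pfrom \<in> \<Gamma>) \<and> pfrom = mtarget m \<and> (pfrom, X) \<in> E \<and> d = mmonitor m)"

text \<open>Admissible executions: legitimate monitors only send PeeV markers [X,M',r'] (with themselves
  as monitor) to the target X; every send of an honest node is produced by HandleMarker on a marker
  it received earlier; malicious nodes (Mal) send arbitrary markers.\<close>
definition valid_run :: "'a set \<Rightarrow> ('a \<times> 'a) set \<Rightarrow> 'a set \<Rightarrow> 'a set \<Rightarrow> ('a,'r) event list \<Rightarrow> bool" where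
  "valid_run V E \<Gamma> Mal evs \<longleftrightarrow>
    (\<forall>i < length evs.
       (let s = fst (evs ! i); d = fst (snd (evs ! i)); m = snd (snd (evs ! i)) in
         s \<in> V \<union> \<Gamma> \<and> d \<in> V \<union> \<Gamma>
       \<and> (s \<in> \<Gamma> \<longrightarrow> mmonitor m = s \<and> mtarget m = d \<and> d \<in> V)
       \<and> (s \<in> V - Mal \<longrightarrow>
            (\<exists>j < i. fst (snd (evs ! j)) = s \<and> snd (snd (evs ! j)) = m
                    \<and> handle_marker_sends E \<Gamma> s (fst (evs ! j)) m d))))"

definition peev_list :: "'a \<Rightarrow> 'a \<Rightarrow> 'r \<Rightarrow> ('a,'r) event list \<Rightarrow> 'a set" where
  "peev_list M N r evs = {P. (P, M, (N, M, r)) \<in> set evs}"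

end

theory Submission
  imports Defs
begin

theorem lemma1:
  fixes V :: "'a set" and E :: "('a \<times> 'a) set" and \<Gamma> Mal :: "'a set"
    and M N P :: 'a and r :: 'r and evs :: "('a,'r) event list"
  assumes "network V E \<Gamma>"
    and "Mal \<subseteq> V"
    and "M \<in> \<Gamma>"
    and "N \<in> Mal"
    and "P \<in> V" and "P \<notin> Mal"
    and "(P, N) \<in> E"
    and "valid_run V E \<Gamma> Mal evs"
    and "\<exists>i j. i < j \<and> j < length evs \<and> evs ! i = (M, N, (N, M, r)) \<and> evs ! j = (N, P, (N, M, r))"
  shows "P \<notin> peev_list M N r evs"
proof
  assume "P \<in> peev_list M N r evs"
  then have "(P, M, (N, M, r)) \<in> set evs" by (simp add: peev_list_def)
  then obtain k where k: "k < length evs" "evs ! k = (P, M, (N, M, r))"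
    by (auto simp: in_set_conv_nth)
  from assms(8) k assms(5,6) obtain j where
    h: "handle_marker_sends E \<Gamma> P (fst (evs ! j)) (N, M, r) M"
    unfolding valid_run_def Let_def by fastforce
  have MV: "M \<notin> V" using assms(1,3) by (auto simp: network_def)
  have EV: "E \<subseteq> V \<times> V" and as: "(N, P) \<notin> E" using assms(1,7) by (auto simp: network_def)
  show False using h MV EV as
    by (auto simp: handle_marker_sends_def mmonitor_def mtarget_def)
qed

end
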